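(* Let $f$ be a spectral density on $\Lambda$ and let $\lambda_{1,n}(f)$ be the smallest eigenvalue of $T_n(f)$. Then $$\limsup_{n\to\infty}\sqrt[2n]{\lambda_{1,n}(f)}\le\tau^*(E_f).$$
   Context: $\Lambda=[-\pi,\pi]$. A spectral density is $f\ge0$, $f\in L^1(\Lambda)$, positive on a set of positive measure; $r(t)=\int_\Lambda e^{-it\lambda}f(\lambda)d\lambda$. $T_n(f)=(r(k-j))_{j,k=0,1,\dots,n}$ is the $(n+1)\times(n+1)$ truncated Toeplitz matrix. $E_f=\{e^{i\lambda}:f(\lambda)>0\}\subset\mathbb T$. Transfinite diameter of compact $F\subset\mathbb C$: $\tau(F)=\lim_{n\to\infty}\max_{z_1,\dots,z_n\in F}\big(\prod_{1\le j<k\le n}|z_j-z_k|\big)^{2/(n(n-1))}$; outer transfinite diameter $\tau^*(E)=\tau(\overline E)$. *)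

theory Defs
  imports "HOL-Analysis.Analysis" "Jordan_Normal_Form.Char_Poly"
begin

definition spectral_density :: "(real \<Rightarrow> real) \<Rightarrow> bool" where
  "spectral_density f \<longleftrightarrow>
     (\<forall>x\<in>{-pi..pi}. 0 \<le> f x) \<and>
     set_integrable lborel {-pi..pi} f \<and>
     emeasure lborel {x\<in>{-pi..pi}. 0 < f x} > 0"

definition cov_fun :: "(real \<Rightarrow> real) \<Rightarrow> int \<Rightarrow> complex" where
  "cov_fun f t = (LINT x:{-pi..pi}|lborel. exp (- \<i> * of_int t * of_real x) * of_real (f x))"

definition toeplitz_mat :: "(real \<Rightarrow> real) \<Rightarrow> nat \<Rightarrow> complex mat" where
  "toeplitz_mat f n = mat (Suc n) (Suc n) (\<lambda>(j, k). cov_fun f (int k - int j))"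

text \<open>Smallest eigenvalue of the (Hermitian) matrix T_n(f); its eigenvalues are real.\<close>
definition min_eig :: "(real \<Rightarrow> real) \<Rightarrow> nat \<Rightarrow> real" where
  "min_eig f n = Min {x :: real. eigenvalue (toeplitz_mat f n) (complex_of_real x)}"

definition E_set :: "(real \<Rightarrow> real) \<Rightarrow> complex set" where
  "E_set f = {cis x | x. x \<in> {-pi..pi} \<and> 0 < f x}"

definition nth_diam :: "complex set \<Rightarrow> nat \<Rightarrow> real" where
  "nth_diam F n = (SUP z \<in> {z :: nat \<Rightarrow> complex. \<forall>i<n. z i \<in> F}.
      (\<Prod>(j, k) \<in> {(j, k). j < k \<and> k < n}. cmod (z j - z k)) powr (2 / (real n * (real n - 1))))"

definition transfinite_diam :: "complex set \<Rightarrow> real" where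
  "transfinite_diam F = lim (nth_diam F)"

definition outer_transfinite_diam :: "complex set \<Rightarrow> real" where
  "outer_transfinite_diam E = transfinite_diam (closure E)"

end

theory Submission
  imports Defs
begin

definition sq :: "nat \<Rightarrow> (nat \<Rightarrow> nat \<Rightarrow> complex) \<Rightarrow> (nat \<Rightarrow> complex) \<Rightarrow> (nat \<Rightarrow> complex) \<Rightarrow> complex" where
  "sq N M u w = (\<Sum>i<N. \<Sum>j<N. cnj (u i) * M i j * w j)"
definition nrm :: "nat \<Rightarrow> (nat \<Rightarrow> complex) \<Rightarrow> real" where
  "nrm N u = (\<Sum>i<N. (cmod (u i))\<^sup>2)"
definition mv :: "nat \<Rightarrow> (nat \<Rightarrow> nat \<Rightarrow> complex) \<Rightarrow> (nat \<Rightarrow> complex) \<Rightarrow> nat \<Rightarrow> complex" where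
  "mv N M w = (\<lambda>i. \<Sum>j<N. M i j * w j)"
definition herm :: "nat \<Rightarrow> (nat \<Rightarrow> nat \<Rightarrow> complex) \<Rightarrow> bool" where
  "herm N M \<longleftrightarrow> (\<forall>i<N. \<forall>j<N. M i j = cnj (M j i))"

lemma nrm_nonneg: "0 \<le> nrm N u" unfolding nrm_def by (simp add: sum_nonneg)

lemma nrm_zero: "nrm N u = 0 \<Longrightarrow> i < N \<Longrightarrow> u i = 0"
  unfolding nrm_def by (subst (asm) sum_nonneg_eq_0_iff) auto

lemma sq_swap: assumes "herm N M" shows "sq N M w u = cnj (sq N M u w)"
proof -
  have "cnj (sq N M u w) = (\<Sum>i<N. \<Sum>j<N. u i * cnj (M i j) * cnj (w j))"
    unfolding sq_def by (simp add: cnj_sum)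
  also have "\<dots> = (\<Sum>j<N. \<Sum>i<N. u i * cnj (M i j) * cnj (w j))" by (rule sum.swap)
  also have "\<dots> = sq N M w u"
  proof -
    have c: "cnj (M i j) = M j i" if "i < N" "j < N" for i j
      using assms that unfolding herm_def by (metis complex_cnj_cnj)
    show ?thesis unfolding sq_def by (intro sum.cong refl) (simp add: c mult_ac)
  qed
  finally show ?thesis by simp
qed

lemma sq_real: assumes "herm N M" shows "sq N M u u = of_real (Re (sq N M u u))"
  using sq_swap[OF assms, of u u] by (metis Reals_cnj_iff complex_is_Real_iff of_real_Re)

lemma t1: "cnj (u + c * w) * m * (v + c * x) =
     cnj u * m * v + c * (cnj u * m * x) + cnj c * (cnj w * m * v)
     + cnj c * c * (cnj w * m * x)" for u c w v x m :: complex
  unfolding complex_cnj_add complex_cnj_mult by (simp add: distrib_left distrib_right mult_ac)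
lemma sq_expand:
  "sq N M (\<lambda>i. u i + c * w i) (\<lambda>i. u i + c * w i) =
   sq N M u u + c * sq N M u w + cnj c * sq N M w u + cnj c * c * sq N M w w"
  unfolding sq_def t1 by (simp only: sum.distrib sum_distrib_left)
lemma cnjs: "cnj s * s = complex_of_real ((cmod s)\<^sup>2)" "s * cnj s = complex_of_real ((cmod s)\<^sup>2)"
  by (metis complex_norm_square mult.commute)+

lemma CS: assumes h: "herm N M" and psd: "\<And>x. 0 \<le> Re (sq N M x x)"
  shows "(cmod (sq N M u w))\<^sup>2 \<le> Re (sq N M u u) * Re (sq N M w w)"
proof -
  define s where "s = sq N M u w"
  define a where "a = Re (sq N M u u)"
  define b where "b = Re (sq N M w w)"
  have swu: "sq N M w u = cnj s" using sq_swap[OF h, of w u] s_def by simp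
  have key: "0 \<le> a - 2 * t * (cmod s)\<^sup>2 + t\<^sup>2 * (cmod s)\<^sup>2 * b" for t :: real
  proof -
    define c where "c = - (of_real t) * cnj s"
    have "0 \<le> Re (sq N M (\<lambda>i. u i + c * w i) (\<lambda>i. u i + c * w i))" by (rule psd)
    also have "\<dots> = Re (sq N M u u + c * s + cnj c * cnj s + cnj c * c * sq N M w w)"
      using sq_expand[of N M u c w] swu s_def by simp
    also have "\<dots> = a - 2 * t * (cmod s)\<^sup>2 + t\<^sup>2 * (cmod s)\<^sup>2 * b"
    proof -
      have 1: "c * s = - of_real (t * (cmod s)\<^sup>2)" unfolding c_def
        by (simp add: cnjs(1) mult.assoc)
      have 2: "cnj c * cnj s = - of_real (t * (cmod s)\<^sup>2)" unfolding c_def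
        by (simp add: cnjs(2) mult.assoc)
      have 3: "cnj c * c = of_real (t\<^sup>2 * (cmod s)\<^sup>2)" unfolding c_def
        by (simp add: power2_eq_square mult.assoc mult.left_commute[of "cnj s"] cnjs(2))
      have "Re (cnj c * c * sq N M w w) = t\<^sup>2 * (cmod s)\<^sup>2 * b"
        unfolding 3 b_def by simp
      thus ?thesis unfolding a_def 1 2 by simp
    qed
    finally show ?thesis .
  qed
  show ?thesis
  proof (cases "b = 0")
    case True
    have "(cmod s)\<^sup>2 = 0"
    proof (rule ccontr)
      assume ne: "(cmod s)\<^sup>2 \<noteq> 0"
      hence pos: "(cmod s)\<^sup>2 > 0" by simp
      have "0 \<le> a - 2 * ((a + 1) / (cmod s)\<^sup>2) * (cmod s)\<^sup>2"
        using key[of "(a+1) / (cmod s)\<^sup>2"] True by simp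
      with pos psd[of u] show False by (simp add: a_def)
    qed
    thus ?thesis using True s_def a_def b_def by simp
  next
    case False
    have bpos: "b > 0" using psd[of w] False b_def by simp
    have "0 \<le> a - 2 * (1/b) * (cmod s)\<^sup>2 + (1/b)\<^sup>2 * (cmod s)\<^sup>2 * b" by (rule key)
    also have "\<dots> = a - (cmod s)\<^sup>2 / b" using bpos by (simp add: power2_eq_square field_simps)
    finally have "(cmod s)\<^sup>2 / b \<le> a" by simp
    hence "(cmod s)\<^sup>2 \<le> a * b" using bpos by (simp add: divide_le_eq mult.commute)
    thus ?thesis using s_def a_def b_def by simp
  qed
qed
lemma prod_le_nrm: assumes "i < N" "j < N" shows "cmod (u i) * cmod (u j) \<le> nrm N u"
proof -
  have "cmod (u i) * cmod (u j) \<le> ((cmod (u i))\<^sup>2 + (cmod (u j))\<^sup>2) / 2"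
    using sum_squares_bound[of "cmod (u i)" "cmod (u j)"] by (simp add: power2_eq_square field_simps)
  also have "\<dots> \<le> nrm N u"
  proof -
    have "(cmod (u i))\<^sup>2 \<le> nrm N u" "(cmod (u j))\<^sup>2 \<le> nrm N u"
      unfolding nrm_def using assms by (auto intro!: member_le_sum)
    thus ?thesis by simp
  qed
  finally show ?thesis .
qed

lemma sq_bound: "cmod (sq N M x x) \<le> (\<Sum>i<N. \<Sum>j<N. cmod (M i j)) * nrm N x"
proof -
  have "cmod (sq N M x x) \<le> (\<Sum>i<N. \<Sum>j<N. cmod (cnj (x i) * M i j * x j))"
    unfolding sq_def by (rule order_trans[OF norm_sum sum_mono]) (rule norm_sum)
  also have "\<dots> \<le> (\<Sum>i<N. \<Sum>j<N. cmod (M i j) * nrm N x)"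
  proof (intro sum_mono)
    fix i j assume "i \<in> {..<N}" "j \<in> {..<N}"
    hence "cmod (x i) * cmod (x j) \<le> nrm N x" by (intro prod_le_nrm) auto
    hence "cmod (M i j) * (cmod (x i) * cmod (x j)) \<le> cmod (M i j) * nrm N x"
      by (intro mult_left_mono) auto
    thus "cmod (cnj (x i) * M i j * x j) \<le> cmod (M i j) * nrm N x"
      by (simp add: norm_mult mult_ac)
  qed
  also have "\<dots> = (\<Sum>i<N. \<Sum>j<N. cmod (M i j)) * nrm N x"
    by (simp add: sum_distrib_right)
  finally show ?thesis .
qed

lemma mv_bound: "nrm N (mv N B w) \<le> (\<Sum>i<N. (\<Sum>j<N. cmod (B i j))\<^sup>2) * nrm N w"
proof -
  have "(cmod (mv N B w i))\<^sup>2 \<le> (\<Sum>j<N. cmod (B i j))\<^sup>2 * nrm N w" for i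
  proof -
    have wj: "cmod (w j) \<le> sqrt (nrm N w)" if "j < N" for j
    proof -
      have "(cmod (w j))\<^sup>2 \<le> nrm N w" unfolding nrm_def using that by (auto intro!: member_le_sum)
      thus ?thesis by (simp add: real_le_rsqrt)
    qed
    have "cmod (mv N B w i) \<le> (\<Sum>j<N. cmod (B i j) * cmod (w j))"
      unfolding mv_def by (rule order_trans[OF norm_sum]) (simp add: norm_mult)
    also have "\<dots> \<le> (\<Sum>j<N. cmod (B i j) * sqrt (nrm N w))"
      by (intro sum_mono mult_left_mono wj) auto
    finally have "cmod (mv N B w i) \<le> (\<Sum>j<N. cmod (B i j)) * sqrt (nrm N w)"
      by (simp add: sum_distrib_right)
    hence "(cmod (mv N B w i))\<^sup>2 \<le> ((\<Sum>j<N. cmod (B i j)) * sqrt (nrm N w))\<^sup>2"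
      by (intro power_mono) auto
    thus ?thesis using nrm_nonneg[of N w] by (simp add: power_mult_distrib)
  qed
  hence "nrm N (mv N B w) \<le> (\<Sum>i<N. (\<Sum>j<N. cmod (B i j))\<^sup>2 * nrm N w)"
    unfolding nrm_def[of N "mv N B w"] by (intro sum_mono) auto
  thus ?thesis by (simp add: sum_distrib_right)
qed

lemma sq_mv: "sq N M (mv N M w) w = of_real (nrm N (mv N M w))"
proof -
  have g: "(\<Sum>j<N. a * M i j * w j) = a * mv N M w i" for a i
    unfolding mv_def by (simp add: sum_distrib_left mult.assoc)
  have "sq N M (mv N M w) w = (\<Sum>i<N. cnj (mv N M w i) * mv N M w i)"
    unfolding sq_def g ..
  also have "\<dots> = of_real (nrm N (mv N M w))"
    unfolding nrm_def of_real_sum by (intro sum.cong refl) (metis complex_norm_square mult.commute)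
  finally show ?thesis .
qed

lemma nrm_cong: "(\<And>i. i < N \<Longrightarrow> x i = y i) \<Longrightarrow> nrm N x = nrm N y"
  unfolding nrm_def by (intro sum.cong) auto

lemma sq_zero: assumes "nrm N x = 0" shows "sq N M x x = 0"
  unfolding sq_def using nrm_zero[OF assms] by (intro sum.neutral ballI) auto

lemma herm_eig:
  fixes A :: "complex mat"
  assumes A: "A \<in> carrier_mat N N" and h: "herm N (\<lambda>i j. A $$ (i,j))" and v: "nrm N v > 0"
  shows "\<exists>\<mu>::real. eigenvalue A (of_real \<mu>) \<and> \<mu> * nrm N v \<le> Re (sq N (\<lambda>i j. A $$ (i,j)) v v)"
proof -
  define M where "M = (\<lambda>i j. A $$ (i,j))"
  define K where "K = (\<Sum>i<N. \<Sum>j<N. cmod (M i j))"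
  define R where "R = {Re (sq N M x x) / nrm N x | x. nrm N x > 0}"
  have Rne: "R \<noteq> {}" using v R_def by auto
  have bdd: "bdd_below R"
  proof (rule bdd_belowI)
    fix r assume "r \<in> R"
    then obtain x where x: "nrm N x > 0" "r = Re (sq N M x x) / nrm N x" unfolding R_def by auto
    have "- (K * nrm N x) \<le> Re (sq N M x x)"
      using sq_bound[of N M x] abs_Re_le_cmod[of "sq N M x x"] unfolding K_def by linarith
    thus "- K \<le> r" using x by (simp add: le_divide_eq)
  qed
  define m where "m = Inf R"
  have mle: "m \<le> Re (sq N M x x) / nrm N x" if "nrm N x > 0" for x
    unfolding m_def using that bdd by (intro cInf_lower) (auto simp: R_def)
  have le_v: "m * nrm N v \<le> Re (sq N M v v)"
    using mle[OF v] v by (simp add: le_divide_eq)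
  have "eigenvalue A (of_real m)"
  proof (rule ccontr)
    assume ne: "\<not> eigenvalue A (of_real m)"
    define C where "C = char_matrix A (of_real m)"
    have det: "det C \<noteq> 0" using eigenvalue_det[OF A] ne C_def by simp
    have Cc: "C \<in> carrier_mat N N" using A C_def by simp
    have Cij: "C $$ (i,j) = A $$ (i,j) - (if i = j then of_real m else 0)" if "i < N" "j < N" for i j
      using A that unfolding C_def char_matrix_def by auto
    from det_non_zero_imp_unit[OF Cc det, of "()"] obtain B where
      B: "B \<in> carrier_mat N N" "B * C = 1\<^sub>m N"
      unfolding Units_def ring_mat_def by auto
    define CC where "CC = (\<lambda>i j. C $$ (i,j))"
    define BB where "BB = (\<lambda>i j. B $$ (i,j))"
    have inv: "mv N BB (mv N CC x) i = x i" if i: "i < N" for x i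
    proof -
      have "mv N BB (mv N CC x) i = (\<Sum>j<N. \<Sum>k<N. B $$ (i,j) * C $$ (j,k) * x k)"
        unfolding mv_def BB_def CC_def by (simp add: sum_distrib_left mult.assoc)
      also have "\<dots> = (\<Sum>k<N. \<Sum>j<N. B $$ (i,j) * C $$ (j,k) * x k)" by (rule sum.swap)
      also have "\<dots> = (\<Sum>k<N. (B * C) $$ (i,k) * x k)"
      proof (intro sum.cong refl)
        fix k assume k: "k \<in> {..<N}"
        have "(B * C) $$ (i,k) = (\<Sum>j<N. B $$ (i,j) * C $$ (j,k))"
          using B(1) Cc i k by (simp add: scalar_prod_def atLeast0LessThan)
        thus "(\<Sum>j<N. B $$ (i,j) * C $$ (j,k) * x k) = (B * C) $$ (i,k) * x k"
          by (simp add: sum_distrib_right)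
      qed
      also have "\<dots> = (\<Sum>k<N. (if i = k then x k else 0))"
        using B(2) i by (intro sum.cong refl) auto
      also have "\<dots> = x i" using i by simp
      finally show ?thesis .
    qed
    define KB where "KB = (\<Sum>i<N. (\<Sum>j<N. cmod (BB i j))\<^sup>2)"
    define KC where "KC = (\<Sum>i<N. \<Sum>j<N. cmod (CC i j))"
    have KB0: "KB \<ge> 0" unfolding KB_def by (simp add: sum_nonneg)
    have KC0: "KC \<ge> 0" unfolding KC_def by (simp add: sum_nonneg)
    have hC: "herm N CC"
      unfolding herm_def
    proof (intro allI impI)
      fix i j assume ij: "i < N" "j < N"
      have e: "cnj (A $$ (j,i)) = A $$ (i,j)" using h ij unfolding herm_def by (metis complex_cnj_cnj)
      show "CC i j = cnj (CC j i)" unfolding CC_def using ij by (simp add: Cij e)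
    qed
    have sqC: "Re (sq N CC x x) = Re (sq N M x x) - m * nrm N x" for x
    proof -
      have "sq N CC x x = sq N M x x - (\<Sum>i<N. \<Sum>j<N. cnj (x i) * (if i = j then of_real m else 0) * x j)"
        unfolding sq_def CC_def M_def
        by (simp add: Cij sum_subtractf right_diff_distrib left_diff_distrib)
      also have "(\<Sum>i<N. \<Sum>j<N. cnj (x i) * (if i = j then of_real m else 0) * x j)
          = (\<Sum>i<N. of_real m * (cnj (x i) * x i))"
        by (intro sum.cong refl) (simp add: if_distrib if_distribR cong: if_cong)
      also have "\<dots> = of_real (m * nrm N x)"
        unfolding nrm_def of_real_mult of_real_sum sum_distrib_left cnjs by simp
      finally show ?thesis by simp
    qed
    have psd: "0 \<le> Re (sq N CC x x)" for x
    proof (cases "nrm N x > 0")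
      case True
      thus ?thesis using mle[OF True] unfolding sqC by (simp add: le_divide_eq)
    next
      case False
      hence "nrm N x = 0" using nrm_nonneg[of N x] by simp
      thus ?thesis using sq_zero by (simp add: sqC)
    qed
    have key: "nrm N w \<le> KB * KC * Re (sq N CC w w)" for w
    proof -
      define r where "r = nrm N (mv N CC w)"
      have r0: "r \<ge> 0" unfolding r_def by (rule nrm_nonneg)
      have "r\<^sup>2 \<le> Re (sq N CC (mv N CC w) (mv N CC w)) * Re (sq N CC w w)"
        using CS[OF hC psd, of "mv N CC w" w] unfolding sq_mv r_def by simp
      also have "\<dots> \<le> (KC * r) * Re (sq N CC w w)"
        using sq_bound[of N CC "mv N CC w"] abs_Re_le_cmod[of "sq N CC (mv N CC w) (mv N CC w)"] psd[of w]
        unfolding KC_def r_def by (intro mult_right_mono) auto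
      finally have r2: "r\<^sup>2 \<le> KC * r * Re (sq N CC w w)" .
      have rb: "r \<le> KC * Re (sq N CC w w)"
      proof (cases "r = 0")
        case True thus ?thesis using KC0 psd[of w] by simp
      next
        case False
        hence "r > 0" using r0 by simp
        thus ?thesis using r2 by (simp add: power2_eq_square mult.assoc)
      qed
      have "nrm N w = nrm N (mv N BB (mv N CC w))" by (rule nrm_cong) (simp add: inv)
      also have "\<dots> \<le> KB * r" unfolding KB_def r_def by (rule mv_bound)
      also have "\<dots> \<le> KB * (KC * Re (sq N CC w w))" by (rule mult_left_mono[OF rb KB0])
      finally show ?thesis by (simp add: mult.assoc)
    qed
    define \<epsilon> where "\<epsilon> = 1 / (KB * KC + 1)"
    have p: "KB * KC \<ge> 0" using KB0 KC0 by simp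
    have eps: "\<epsilon> > 0" "KB * KC * \<epsilon> < 1" using p unfolding \<epsilon>_def by (auto simp: field_simps)
    have "Inf R < m + \<epsilon>" using eps m_def by simp
    from cInf_lessD[OF Rne this] obtain w where w: "nrm N w > 0" "Re (sq N M w w) / nrm N w < m + \<epsilon>"
      unfolding R_def by auto
    have "Re (sq N CC w w) < \<epsilon> * nrm N w" using w unfolding sqC by (simp add: divide_less_eq algebra_simps)
    hence "KB * KC * Re (sq N CC w w) \<le> KB * KC * (\<epsilon> * nrm N w)"
      using KB0 KC0 by (intro mult_left_mono) auto
    also have "\<dots> < nrm N w" using eps w(1) by (simp add: mult.assoc[symmetric])
    finally show False using key[of w] by simp
  qed
  thus ?thesis using le_v unfolding M_def by blast
qed

lemma prod_swap_count:
  fixes g :: "'a \<Rightarrow> real"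
  assumes P: "finite P" and K: "finite K"
  shows "(\<Prod>k\<in>K. \<Prod>p\<in>{p\<in>P. Q k p}. g p) = (\<Prod>p\<in>P. g p ^ card {k\<in>K. Q k p})"
proof -
  have "(\<Prod>k\<in>K. \<Prod>p\<in>{p\<in>P. Q k p}. g p) = (\<Prod>k\<in>K. \<Prod>p\<in>P. if Q k p then g p else 1)"
    using P by (simp add: prod.inter_filter)
  also have "\<dots> = (\<Prod>p\<in>P. \<Prod>k\<in>K. if Q k p then g p else 1)" by (rule prod.swap)
  also have "\<dots> = (\<Prod>p\<in>P. \<Prod>k\<in>{k\<in>K. Q k p}. g p)"
    unfolding prod.inter_filter[OF K] ..
  also have "\<dots> = (\<Prod>p\<in>P. g p ^ card {k\<in>K. Q k p})" by simp
  finally show ?thesis .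
qed

definition pairs :: "nat \<Rightarrow> (nat \<times> nat) set" where
  "pairs N = {(j, k). j < k \<and> k < N}"
definition Vp :: "nat \<Rightarrow> (nat \<Rightarrow> complex) \<Rightarrow> real" where
  "Vp N z = (\<Prod>(j, k) \<in> pairs N. cmod (z j - z k))"
definition ed :: "nat \<Rightarrow> real" where
  "ed N = 2 / (real N * (real N - 1))"
definition tuples :: "complex set \<Rightarrow> nat \<Rightarrow> (nat \<Rightarrow> complex) set" where
  "tuples F N = {z. \<forall>i<N. z i \<in> F}"

lemma nth_diam_alt: "nth_diam F N = (SUP z \<in> tuples F N. Vp N z powr ed N)"
  unfolding nth_diam_def tuples_def Vp_def pairs_def ed_def ..

lemma pairs_finite: "finite (pairs N)"
  by (rule finite_subset[of _ "{..<N} \<times> {..<N}"]) (auto simp: pairs_def)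

lemma pairs_card: "card (pairs N) \<le> N * N"
proof -
  have "card (pairs N) \<le> card ({..<N} \<times> {..<N})"
    by (rule card_mono) (auto simp: pairs_def)
  thus ?thesis by (simp add: card_cartesian_product)
qed

lemma Vp_nonneg: "0 \<le> Vp N z"
  unfolding Vp_def by (intro prod_nonneg) auto

lemma Vp_le: assumes F: "F \<subseteq> cball 0 1" and z: "z \<in> tuples F N"
  shows "Vp N z \<le> 2 ^ (N * N)"
proof -
  have "Vp N z \<le> (\<Prod>p \<in> pairs N. 2)"
    unfolding Vp_def
  proof (intro prod_mono, clarify)
    fix j k assume "(j, k) \<in> pairs N"
    hence "j < N" "k < N" by (auto simp: pairs_def)
    hence "z j \<in> cball 0 1" "z k \<in> cball 0 1" using z F unfolding tuples_def by auto
    hence "cmod (z j - z k) \<le> cmod (z j) + cmod (z k)" "cmod (z j) \<le> 1" "cmod (z k) \<le> 1"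
      using norm_triangle_ineq4 by auto
    thus "0 \<le> cmod (z j - z k) \<and> cmod (z j - z k) \<le> 2" by auto
  qed
  also have "\<dots> = 2 ^ card (pairs N)" by simp
  also have "\<dots> \<le> 2 ^ (N * N)" by (rule power_increasing[OF pairs_card]) auto
  finally show ?thesis .
qed

lemma pairs_small: "N < 2 \<Longrightarrow> pairs N = {}"
  unfolding pairs_def by auto

lemma Vp_powr_le: assumes F: "F \<subseteq> cball 0 1" and z: "z \<in> tuples F N"
  shows "Vp N z powr ed N \<le> 16"
proof (cases "N < 2")
  case True
  thus ?thesis unfolding Vp_def pairs_small[OF True] by simp
next
  case False
  hence N2: "real N \<ge> 2" by simp
  have ed0: "ed N \<ge> 0" unfolding ed_def using N2 by simp
  have "Vp N z powr ed N \<le> (2 ^ (N * N)) powr ed N"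
    by (intro powr_mono2 ed0 Vp_nonneg Vp_le[OF F z])
  also have "\<dots> = 2 powr (real (N * N) * ed N)"
    by (simp add: powr_realpow[symmetric] powr_powr)
  also have "\<dots> \<le> 2 powr 4"
  proof (intro powr_mono)
    have "real (N * N) * ed N = 2 * real N / (real N - 1)"
      unfolding ed_def using N2 by (simp add: field_simps)
    also have "\<dots> \<le> 4" using N2 by (simp add: field_simps)
    finally show "real (N * N) * ed N \<le> 4" .
  qed auto
  finally show ?thesis by simp
qed

lemma tuples_ne: "F \<noteq> {} \<Longrightarrow> tuples F N \<noteq> {}"
  unfolding tuples_def by auto

lemma diam_bdd: "F \<subseteq> cball 0 1 \<Longrightarrow> bdd_above ((\<lambda>z. Vp N z powr ed N) ` tuples F N)"
  by (rule bdd_aboveI2[of _ _ 16]) (rule Vp_powr_le)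

lemma diam_upper: assumes "F \<subseteq> cball 0 1" "z \<in> tuples F N"
  shows "Vp N z powr ed N \<le> nth_diam F N"
  unfolding nth_diam_alt using assms by (intro cSUP_upper diam_bdd)

lemma diam_nonneg: assumes "F \<subseteq> cball 0 1" "F \<noteq> {}" shows "0 \<le> nth_diam F N"
proof -
  obtain z where "z \<in> tuples F N" using tuples_ne[OF assms(2)] by auto
  thus ?thesis using diam_upper[OF assms(1)] by (meson order_trans powr_ge_zero)
qed

definition skip :: "nat \<Rightarrow> nat \<Rightarrow> nat" where
  "skip k i = (if i < k then i else Suc i)"

lemma pairs_skip:
  assumes k: "k < Suc N"
  shows "{p \<in> pairs (Suc N). fst p \<noteq> k \<and> snd p \<noteq> k} = (\<lambda>(i,j). (skip k i, skip k j)) ` pairs N"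
    and "inj_on (\<lambda>(i,j). (skip k i, skip k j)) (pairs N)"
proof -
  show "{p \<in> pairs (Suc N). fst p \<noteq> k \<and> snd p \<noteq> k} = (\<lambda>(i,j). (skip k i, skip k j)) ` pairs N"
  proof (intro equalityI subsetI)
    fix p assume p: "p \<in> {p \<in> pairs (Suc N). fst p \<noteq> k \<and> snd p \<noteq> k}"
    obtain a b where ab: "p = (a,b)" by (cases p)
    define a' where "a' = (if a < k then a else a - 1)"
    define b' where "b' = (if b < k then b else b - 1)"
    have "(a', b') \<in> pairs N" "skip k a' = a" "skip k b' = b"
      using p ab k unfolding a'_def b'_def skip_def pairs_def by auto
    thus "p \<in> (\<lambda>(i,j). (skip k i, skip k j)) ` pairs N" using ab by force
  next
    fix p assume "p \<in> (\<lambda>(i,j). (skip k i, skip k j)) ` pairs N"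
    then obtain i j where "(i,j) \<in> pairs N" "p = (skip k i, skip k j)" by auto
    thus "p \<in> {p \<in> pairs (Suc N). fst p \<noteq> k \<and> snd p \<noteq> k}"
      unfolding skip_def pairs_def by auto
  qed
  show "inj_on (\<lambda>(i,j). (skip k i, skip k j)) (pairs N)"
    unfolding inj_on_def skip_def by (auto split: if_splits)
qed

lemma Vp_skip: assumes k: "k < Suc N"
  shows "Vp N (z \<circ> skip k) = (\<Prod>p\<in>{p \<in> pairs (Suc N). fst p \<noteq> k \<and> snd p \<noteq> k}. cmod (z (fst p) - z (snd p)))"
  unfolding pairs_skip(1)[OF k] Vp_def
  by (subst prod.reindex[OF pairs_skip(2)[OF k]]) (simp add: case_prod_beta)

lemma Vp_fst_snd: "Vp N z = (\<Prod>p\<in>pairs N. cmod (z (fst p) - z (snd p)))"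
  unfolding Vp_def by (simp add: case_prod_beta)

lemma drop_identity:
  "(\<Prod>k<Suc N. Vp N (z \<circ> skip k)) = Vp (Suc N) z ^ (N - 1)"
proof -
  have "(\<Prod>k<Suc N. Vp N (z \<circ> skip k)) =
     (\<Prod>k<Suc N. \<Prod>p\<in>{p \<in> pairs (Suc N). fst p \<noteq> k \<and> snd p \<noteq> k}. cmod (z (fst p) - z (snd p)))"
    by (intro prod.cong refl Vp_skip) auto
  also have "\<dots> = (\<Prod>p\<in>pairs (Suc N). cmod (z (fst p) - z (snd p)) ^ card {k\<in>{..<Suc N}. fst p \<noteq> k \<and> snd p \<noteq> k})"
    by (rule prod_swap_count[OF pairs_finite]) simp
  also have "\<dots> = (\<Prod>p\<in>pairs (Suc N). cmod (z (fst p) - z (snd p)) ^ (N - 1))"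
  proof (intro prod.cong refl)
    fix p assume p: "p \<in> pairs (Suc N)"
    have "{k\<in>{..<Suc N}. fst p \<noteq> k \<and> snd p \<noteq> k} = {..<Suc N} - {fst p, snd p}" by auto
    moreover have "card ({..<Suc N} - {fst p, snd p}) = N - 1"
      using p unfolding pairs_def by (subst card_Diff_subset) auto
    ultimately show "cmod (z (fst p) - z (snd p)) ^ card {k\<in>{..<Suc N}. fst p \<noteq> k \<and> snd p \<noteq> k} =
        cmod (z (fst p) - z (snd p)) ^ (N - 1)" by simp
  qed
  also have "\<dots> = Vp (Suc N) z ^ (N - 1)" unfolding Vp_fst_snd by (simp add: prod_power_distrib)
  finally show ?thesis .
qed

lemma powr_inv_le: fixes x e d :: real assumes x: "0 \<le> x" and e: "e > 0" and le: "x powr e \<le> d"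
  shows "x \<le> d powr (1 / e)"
proof -
  have "(x powr e) powr (1 / e) = x powr (e * (1 / e))" by (rule powr_powr)
  also have "\<dots> = x" using x e by simp
  finally have "x = (x powr e) powr (1 / e)" by simp
  also have "\<dots> \<le> d powr (1 / e)" using le e by (intro powr_mono2) auto
  finally show ?thesis .
qed

lemma skip_tuples: assumes "z \<in> tuples F (Suc N)" "k < Suc N" shows "z \<circ> skip k \<in> tuples F N"
  using assms unfolding tuples_def skip_def by auto

lemma diam_mono: assumes F: "F \<subseteq> cball 0 1" "F \<noteq> {}" and N: "N \<ge> 2"
  shows "nth_diam F (Suc N) \<le> nth_diam F N"
proof -
  define d where "d = nth_diam F N"
  have d0: "d \<ge> 0" unfolding d_def by (rule diam_nonneg[OF F])
  have eN: "ed N > 0" unfolding ed_def using N by simp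
  define a where "a = 1 / ed N"
  have a: "a = real N * (real N - 1) / 2" unfolding a_def ed_def by simp
  show ?thesis unfolding nth_diam_alt[of F "Suc N"]
  proof (rule cSUP_least[OF tuples_ne[OF F(2)]])
    fix z assume z: "z \<in> tuples F (Suc N)"
    define x where "x = Vp (Suc N) z"
    have x0: "x \<ge> 0" unfolding x_def by (rule Vp_nonneg)
    have each: "Vp N (z \<circ> skip k) \<le> d powr a" if "k < Suc N" for k
      unfolding a_def
      by (rule powr_inv_le[OF Vp_nonneg eN]) (unfold d_def, rule diam_upper[OF F(1) skip_tuples[OF z that]])
    have "x ^ (N - 1) = (\<Prod>k<Suc N. Vp N (z \<circ> skip k))" unfolding x_def by (rule drop_identity[symmetric])
    also have "\<dots> \<le> (\<Prod>k<Suc N. d powr a)" by (intro prod_mono conjI Vp_nonneg each) auto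
    also have "\<dots> = (d powr a) ^ Suc N" by simp
    finally have xd: "x ^ (N - 1) \<le> (d powr a) ^ Suc N" .
    show "Vp (Suc N) z powr ed (Suc N) \<le> nth_diam F N"
    proof (cases "x = 0")
      case True thus ?thesis using d0 x_def d_def by simp
    next
      case False
      hence xpos: "x > 0" using x0 by simp
      have "d \<noteq> 0"
      proof
        assume "d = 0"
        hence "x ^ (N - 1) \<le> 0" using xd by simp
        moreover have "x ^ (N - 1) > 0" using xpos by simp
        ultimately show False by simp
      qed
      hence dpos: "d > 0" using d0 by simp
      have "x powr (real N - 1) \<le> d powr (a * (real N + 1))"
        using xd xpos dpos N by (simp add: powr_realpow[symmetric] powr_powr of_nat_diff powr_add[symmetric] algebra_simps)
      hence "(x powr (real N - 1)) powr (ed (Suc N) / (real N - 1)) \<le> (d powr (a * (real N + 1))) powr (ed (Suc N) / (real N - 1))"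
        using N by (intro powr_mono2) (auto simp: ed_def)
      hence ineq: "x powr ed (Suc N) \<le> d powr (a * (real N + 1) * ed (Suc N) / (real N - 1))"
        using N by (simp add: powr_powr)
      have "real N * real N \<ge> 2 * 2" using N by (intro mult_mono) auto
      hence nn: "real N * real N \<noteq> 1" by simp
      have eq: "a * (real N + 1) * ed (Suc N) / (real N - 1) = 1"
        unfolding a ed_def using N nn by (simp add: field_simps)
      show ?thesis using ineq dpos x_def d_def unfolding eq by simp
    qed
  qed
qed

lemma diam_le16: assumes F: "F \<subseteq> cball 0 1" "F \<noteq> {}" shows "nth_diam F N \<le> 16"
  unfolding nth_diam_alt by (rule cSUP_least[OF tuples_ne[OF F(2)]]) (rule Vp_powr_le[OF F(1)])

lemma diam_conv: assumes F: "F \<subseteq> cball 0 1" "F \<noteq> {}"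
  shows "(\<lambda>n. nth_diam F (Suc n)) \<longlonglongrightarrow> lim (nth_diam F)"
proof -
  define s where "s = (\<lambda>n. nth_diam F (n + 2))"
  have "decseq s" unfolding s_def
    by (rule decseq_SucI) (simp add: diam_mono[OF F])
  moreover have "Bseq s" unfolding s_def
    using diam_le16[OF F] diam_nonneg[OF F] by (intro BseqI'[of _ 16]) auto
  ultimately have "convergent s" using Bseq_monoseq_convergent monoseq_iff by blast
  then obtain L where "s \<longlonglongrightarrow> L" unfolding convergent_def by auto
  hence L: "nth_diam F \<longlonglongrightarrow> L" unfolding s_def by (rule LIMSEQ_offset)
  hence "lim (nth_diam F) = L" by (rule limI)
  thus ?thesis using LIMSEQ_Suc[OF L] by simp
qed

definition ck :: "nat \<Rightarrow> (nat \<Rightarrow> complex) \<Rightarrow> nat \<Rightarrow> real" where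
  "ck N y k = (\<Prod>j\<in>{..<N}-{k}. cmod (y k - y j))"
definition Wk :: "nat \<Rightarrow> (nat \<Rightarrow> complex) \<Rightarrow> nat \<Rightarrow> real" where
  "Wk N y k = (\<Prod>p\<in>{p\<in>pairs N. fst p \<noteq> k \<and> snd p \<noteq> k}. cmod (y (fst p) - y (snd p)))"

lemma ck_nonneg: "0 \<le> ck N y k" unfolding ck_def by (intro prod_nonneg) auto
lemma Wk_nonneg: "0 \<le> Wk N y k" unfolding Wk_def by (intro prod_nonneg) auto

lemma pairsA: assumes k: "k < N"
  shows "{p\<in>pairs N. fst p = k \<or> snd p = k} = (\<lambda>j. (min j k, max j k)) ` ({..<N}-{k})"
    and "inj_on (\<lambda>j. (min j k, max j k)) ({..<N}-{k})"
proof -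
  show "{p\<in>pairs N. fst p = k \<or> snd p = k} = (\<lambda>j. (min j k, max j k)) ` ({..<N}-{k})"
  proof (intro equalityI subsetI)
    fix p assume p: "p \<in> {p\<in>pairs N. fst p = k \<or> snd p = k}"
    obtain a b where ab: "p = (a,b)" by (cases p)
    show "p \<in> (\<lambda>j. (min j k, max j k)) ` ({..<N}-{k})"
    proof (cases "a = k")
      case True
      hence "p = (min b k, max b k)" "b \<in> {..<N}-{k}" using p ab by (auto simp: pairs_def)
      thus ?thesis by blast
    next
      case False
      hence "p = (min a k, max a k)" "a \<in> {..<N}-{k}" using p ab by (auto simp: pairs_def)
      thus ?thesis by blast
    qed
  next
    fix p assume "p \<in> (\<lambda>j. (min j k, max j k)) ` ({..<N}-{k})"
    then obtain j where "j < N" "j \<noteq> k" "p = (min j k, max j k)" by auto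
    thus "p \<in> {p\<in>pairs N. fst p = k \<or> snd p = k}" using k by (auto simp: pairs_def min_def max_def)
  qed
  show "inj_on (\<lambda>j. (min j k, max j k)) ({..<N}-{k})"
    unfolding inj_on_def by (auto simp: min_def max_def split: if_splits)
qed

lemma prodA: assumes k: "k < N"
  shows "(\<Prod>p\<in>{p\<in>pairs N. fst p = k \<or> snd p = k}. cmod (y (fst p) - y (snd p))) = ck N y k"
  unfolding pairsA(1)[OF k] ck_def
  by (subst prod.reindex[OF pairsA(2)[OF k]])
     (intro prod.cong refl, auto simp: min_def max_def norm_minus_commute)

lemma Vp_split: assumes k: "k < N" shows "Vp N y = ck N y k * Wk N y k"
proof -
  have "pairs N = {p\<in>pairs N. fst p = k \<or> snd p = k} \<union> {p\<in>pairs N. fst p \<noteq> k \<and> snd p \<noteq> k}" by auto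
  hence "Vp N y = (\<Prod>p\<in>{p\<in>pairs N. fst p = k \<or> snd p = k} \<union> {p\<in>pairs N. fst p \<noteq> k \<and> snd p \<noteq> k}. cmod (y (fst p) - y (snd p)))"
    unfolding Vp_fst_snd by simp
  also have "\<dots> = ck N y k * Wk N y k"
    by (subst prod.union_disjoint) (auto intro: finite_subset[OF _ pairs_finite] simp: prodA[OF k] Wk_def)
  finally show ?thesis .
qed

lemma Vp_sq: "Vp N y ^ 2 = (\<Prod>k<N. ck N y k)"
proof -
  have "(\<Prod>k<N. ck N y k) = (\<Prod>k<N. \<Prod>p\<in>{p\<in>pairs N. fst p = k \<or> snd p = k}. cmod (y (fst p) - y (snd p)))"
    by (intro prod.cong refl prodA[symmetric]) auto
  also have "\<dots> = (\<Prod>p\<in>pairs N. cmod (y (fst p) - y (snd p)) ^ card {k\<in>{..<N}. fst p = k \<or> snd p = k})"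
    by (rule prod_swap_count[OF pairs_finite]) simp
  also have "\<dots> = (\<Prod>p\<in>pairs N. cmod (y (fst p) - y (snd p)) ^ 2)"
  proof (intro prod.cong refl)
    fix p assume p: "p \<in> pairs N"
    have "{k\<in>{..<N}. fst p = k \<or> snd p = k} = {fst p, snd p}" using p by (auto simp: pairs_def)
    moreover have "card {fst p, snd p} = 2" using p by (auto simp: pairs_def)
    ultimately show "cmod (y (fst p) - y (snd p)) ^ card {k\<in>{..<N}. fst p = k \<or> snd p = k} =
       cmod (y (fst p) - y (snd p)) ^ 2" by simp
  qed
  also have "\<dots> = Vp N y ^ 2" unfolding Vp_fst_snd by (simp add: prod_power_distrib)
  finally show ?thesis by simp
qed

lemma Wk_upd: "Wk N (y(k:=w)) k = Wk N y k"
  unfolding Wk_def by (intro prod.cong refl) auto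

lemma ck_upd: "ck N (y(k:=w)) k = (\<Prod>j\<in>{..<N}-{k}. cmod (w - y j))"
  unfolding ck_def by (intro prod.cong refl) auto

lemma skip_image: assumes "k < Suc n" shows "skip k ` {..<n} = {..<Suc n} - {k}" "inj_on (skip k) {..<n}"
proof -
  show "skip k ` {..<n} = {..<Suc n} - {k}"
  proof (intro equalityI subsetI)
    fix x assume "x \<in> skip k ` {..<n}" thus "x \<in> {..<Suc n} - {k}" by (auto simp: skip_def)
  next
    fix x assume x: "x \<in> {..<Suc n} - {k}"
    show "x \<in> skip k ` {..<n}"
    proof (cases "x < k")
      case True thus ?thesis using x assms by (intro image_eqI[of _ _ x]) (auto simp: skip_def)
    next
      case False thus ?thesis using x assms by (intro image_eqI[of _ _ "x - 1"]) (auto simp: skip_def)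
    qed
  qed
  show "inj_on (skip k) {..<n}" unfolding inj_on_def skip_def by auto
qed

lemma cheb:
  assumes F: "F \<subseteq> cball 0 1" "F \<noteq> {}" and n: "n \<ge> 1" and dpos: "nth_diam F (Suc n) > 0"
  shows "\<exists>z. (\<forall>i<n. z i \<in> F) \<and> (\<forall>w\<in>F. (\<Prod>i<n. cmod (w - z i)) \<le> 2 * nth_diam F (Suc n) ^ n)"
proof -
  define N where "N = Suc n"
  define d where "d = nth_diam F N"
  have d: "d > 0" using dpos unfolding d_def N_def .
  define e where "e = ed N"
  have e: "e > 0" unfolding e_def ed_def N_def using n by simp
  define D where "D = d powr (1 / e)"
  have D: "D > 0" unfolding D_def using d by simp
  have dD: "D powr e = d" unfolding D_def using d e by (simp add: powr_powr)
  have upper: "Vp N y \<le> D" if "y \<in> tuples F N" for y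
    unfolding D_def e_def d_def by (rule powr_inv_le[OF Vp_nonneg _ diam_upper[OF F(1) that]]) (use n in \<open>simp add: ed_def N_def\<close>)
  have "(D/2) powr e < D powr e" using D e by (intro powr_less_mono2) auto
  hence "(D/2) powr e < d" using dD by simp
  hence "(D/2) powr e < (SUP z \<in> tuples F N. Vp N z powr ed N)"
    unfolding d_def nth_diam_alt e_def .
  then obtain y where y: "y \<in> tuples F N" and yv: "(D/2) powr e < Vp N y powr e"
    using less_cSUP_iff[OF tuples_ne[OF F(2)] diam_bdd[OF F(1)]] unfolding e_def by blast
  have VD: "D/2 < Vp N y"
  proof (rule ccontr)
    assume "\<not> D/2 < Vp N y"
    hence "Vp N y powr e \<le> (D/2) powr e" using e by (intro powr_mono2) (auto simp: Vp_nonneg)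
    with yv show False by simp
  qed
  define V where "V = Vp N y"
  have Vpos: "V > 0" using VD D V_def by simp
  define m where "m = Min (ck N y ` {..<N})"
  have "m \<in> ck N y ` {..<N}" unfolding m_def by (rule Min_in) (auto simp: N_def)
  then obtain k where k: "k < N" and mk: "m = ck N y k" by auto
  have kmin: "ck N y k \<le> ck N y j" if "j < N" for j
    unfolding mk[symmetric] m_def using that by (intro Min_le) auto
  have "ck N y k ^ N = (\<Prod>j<N. ck N y k)" by simp
  also have "\<dots> \<le> (\<Prod>j<N. ck N y j)" by (intro prod_mono conjI ck_nonneg kmin) auto
  also have "\<dots> = V ^ 2" unfolding V_def Vp_sq ..
  also have "\<dots> \<le> D ^ 2" using Vpos upper[OF y] V_def by (intro power_mono) auto
  also have "D ^ 2 = (d ^ n) ^ N"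
  proof -
    have "D ^ 2 = d powr (2 / e)" unfolding D_def using d by (simp add: powr_realpow[symmetric] powr_powr)
    also have "2 / e = real (N * n)" unfolding e_def ed_def N_def by (simp add: algebra_simps)
    also have "d powr real (N * n) = d ^ (N * n)" using d by (rule powr_realpow)
    finally show ?thesis unfolding power_mult[of d n N, symmetric] mult.commute[of n N] .
  qed
  finally have "ck N y k ^ N \<le> (d ^ n) ^ N" .
  hence "ck N y k ^ Suc n \<le> (d ^ n) ^ Suc n" unfolding N_def .
  hence ckle: "ck N y k \<le> d ^ n"
    by (rule power_le_imp_le_base) (use d in \<open>simp add: less_imp_le\<close>)
  define W where "W = Wk N y k"
  have VW: "V = ck N y k * W" unfolding V_def W_def by (rule Vp_split[OF k])
  have Wpos: "W > 0"
  proof (rule ccontr)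
    assume "\<not> W > 0"
    hence "W = 0" using Wk_nonneg[of N y k] unfolding W_def by linarith
    hence "V = 0" using VW by simp
    thus False using Vpos by simp
  qed
  define z where "z = y \<circ> skip k"
  have zF: "\<forall>i<n. z i \<in> F" using skip_tuples[of y F n k] y k unfolding z_def N_def tuples_def by auto
  have "\<forall>w\<in>F. (\<Prod>i<n. cmod (w - z i)) \<le> 2 * d ^ n"
  proof
    fix w assume w: "w \<in> F"
    have y': "y(k:=w) \<in> tuples F N" using y w unfolding tuples_def by auto
    have "(\<Prod>i<n. cmod (w - z i)) = (\<Prod>j\<in>{..<N}-{k}. cmod (w - y j))"
      unfolding z_def N_def skip_image(1)[OF k[unfolded N_def], symmetric]
      by (subst prod.reindex[OF skip_image(2)[OF k[unfolded N_def]]]) simp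
    also have "\<dots> = ck N (y(k:=w)) k" by (rule ck_upd[symmetric])
    finally have c': "(\<Prod>i<n. cmod (w - z i)) = ck N (y(k:=w)) k" .
    have "ck N (y(k:=w)) k * W = Vp N (y(k:=w))"
      unfolding W_def Vp_split[OF k, of "y(k:=w)"] Wk_upd ..
    also have "\<dots> \<le> D" by (rule upper[OF y'])
    also have "\<dots> < 2 * V" using VD V_def by simp
    also have "\<dots> = (2 * ck N y k) * W" unfolding VW by simp
    finally have "ck N (y(k:=w)) k < 2 * ck N y k" using Wpos by simp
    thus "(\<Prod>i<n. cmod (w - z i)) \<le> 2 * d ^ n" using ckle c' by simp
  qed
  thus ?thesis using zF unfolding d_def N_def by blast
qed

lemma diam_pos: assumes F: "F \<subseteq> cball 0 1" "infinite F" shows "nth_diam F N > 0"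
proof -
  obtain A where A: "finite A" "card A = N" "A \<subseteq> F" using infinite_arbitrarily_large[OF F(2)] by blast
  obtain h where h: "bij_betw h {0..<N} A" using ex_bij_betw_nat_finite[OF A(1)] A(2) by auto
  have ht: "h \<in> tuples F N" using h A(3) unfolding tuples_def bij_betw_def by auto
  have "Vp N h > 0" unfolding Vp_def
  proof (intro prod_pos, clarify)
    fix j k assume "(j,k) \<in> pairs N"
    hence "j \<in> {0..<N}" "k \<in> {0..<N}" "j \<noteq> k" by (auto simp: pairs_def)
    hence "h j \<noteq> h k" using h unfolding bij_betw_def inj_on_def by blast
    thus "0 < cmod (h j - h k)" by simp
  qed
  hence "Vp N h powr ed N > 0" by simp
  also have "\<dots> \<le> nth_diam F N" by (rule diam_upper[OF F(1) ht])
  finally show ?thesis .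
qed

definition Exf :: "int \<Rightarrow> real \<Rightarrow> complex" where
  "Exf t x = exp (- \<i> * of_int t * of_real x)"
definition hf :: "(real \<Rightarrow> real) \<Rightarrow> real \<Rightarrow> real" where
  "hf f x = indicator {-pi..pi} x * f x"
definition qf :: "nat \<Rightarrow> (nat \<Rightarrow> complex) \<Rightarrow> real \<Rightarrow> complex" where
  "qf N v x = (\<Sum>k<N. v k * Exf (int k) x)"

lemma Ex_mult: "Exf a x * Exf b x = Exf (a + b) x"
  unfolding Exf_def by (simp add: exp_add[symmetric] algebra_simps)

lemma Ex_cnj: "cnj (Exf a x) = Exf (- a) x"
  unfolding Exf_def by (simp add: exp_cnj)

lemma Ex_norm: "cmod (Exf a x) = 1"
  unfolding Exf_def by (simp add: norm_exp_eq_Re)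

lemma Ex_cont: "continuous_on UNIV (Exf t)"
  unfolding Exf_def by (intro continuous_intros)

lemma hf_integrable: "spectral_density f \<Longrightarrow> integrable lborel (hf f)"
  unfolding spectral_density_def set_integrable_def hf_def by simp

lemma hf_nonneg: "spectral_density f \<Longrightarrow> 0 \<le> hf f x"
  unfolding spectral_density_def hf_def indicator_def by auto

lemma cov_alt: "cov_fun f t = (LINT x|lborel. Exf t x * of_real (hf f x))"
  unfolding cov_fun_def set_lebesgue_integral_def hf_def Exf_def
  by (intro Bochner_Integration.integral_cong refl) (simp add: indicator_def)

lemma Ex_integrable: assumes "spectral_density f"
  shows "integrable lborel (\<lambda>x. Exf t x * of_real (hf f x))"
proof (rule Bochner_Integration.integrable_bound[OF hf_integrable[OF assms]])
  have m1: "Exf t \<in> borel_measurable lborel" using borel_measurable_continuous_onI[OF Ex_cont] by simp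
  have m2: "hf f \<in> borel_measurable lborel" using hf_integrable[OF assms] by auto
  show "(\<lambda>x. Exf t x * of_real (hf f x)) \<in> borel_measurable lborel"
    using m1 m2 by measurable
  show "AE x in lborel. norm (Exf t x * of_real (hf f x)) \<le> norm (hf f x)"
    by (simp add: norm_mult Ex_norm)
qed

lemma quadform:
  assumes sd: "spectral_density f"
  shows "sq (Suc n) (\<lambda>i j. toeplitz_mat f n $$ (i,j)) v v =
     of_real (LINT x|lborel. (cmod (qf (Suc n) v x))\<^sup>2 * hf f x)"
proof -
  define N where "N = Suc n"
  have ent: "toeplitz_mat f n $$ (i,j) = cov_fun f (int j - int i)" if "i < N" "j < N" for i j
    using that unfolding toeplitz_mat_def N_def by simp
  have "sq N (\<lambda>i j. toeplitz_mat f n $$ (i,j)) v v =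
      (\<Sum>i<N. \<Sum>j<N. LINT x|lborel. cnj (v i) * v j * (Exf (int j - int i) x * of_real (hf f x)))"
    unfolding sq_def
    by (intro sum.cong refl, simp add: ent cov_alt Ex_integrable[OF sd] mult_ac)
  also have "\<dots> = (LINT x|lborel. (\<Sum>i<N. \<Sum>j<N. cnj (v i) * v j * (Exf (int j - int i) x * of_real (hf f x))))"
  proof -
    have int1: "integrable lborel (\<lambda>x. cnj (v i) * v j * (Exf (int j - int i) x * of_real (hf f x)))" for i j
      by (intro integrable_mult_right Ex_integrable[OF sd])
    have "(\<Sum>i<N. \<Sum>j<N. LINT x|lborel. cnj (v i) * v j * (Exf (int j - int i) x * of_real (hf f x)))
      = (\<Sum>i<N. LINT x|lborel. (\<Sum>j<N. cnj (v i) * v j * (Exf (int j - int i) x * of_real (hf f x))))"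
    proof (intro sum.cong refl)
      fix i
      show "(\<Sum>j<N. LINT x|lborel. cnj (v i) * v j * (Exf (int j - int i) x * of_real (hf f x)))
        = (LINT x|lborel. (\<Sum>j<N. cnj (v i) * v j * (Exf (int j - int i) x * of_real (hf f x))))"
        using Bochner_Integration.integral_sum[where I="{..<N}" and M=lborel and f="\<lambda>j x. cnj (v i) * v j * (Exf (int j - int i) x * of_real (hf f x))"] int1
        by simp
    qed
    also have "\<dots> = (LINT x|lborel. (\<Sum>i<N. \<Sum>j<N. cnj (v i) * v j * (Exf (int j - int i) x * of_real (hf f x))))"
      using Bochner_Integration.integral_sum[where I="{..<N}" and M=lborel and f="\<lambda>i x. (\<Sum>j<N. cnj (v i) * v j * (Exf (int j - int i) x * of_real (hf f x)))"] int1
      by simp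
    finally show ?thesis .
  qed
  also have "\<dots> = (LINT x|lborel. complex_of_real ((cmod (qf N v x))\<^sup>2 * hf f x))"
  proof (intro Bochner_Integration.integral_cong refl)
    fix x
    have "complex_of_real ((cmod (qf N v x))\<^sup>2) = qf N v x * cnj (qf N v x)"
      by (rule complex_norm_square)
    also have "\<dots> = (\<Sum>i<N. \<Sum>j<N. cnj (v i) * v j * Exf (int j - int i) x)"
      unfolding qf_def cnj_sum sum_distrib_left sum_distrib_right
      by (intro sum.cong refl) (simp add: Ex_cnj mult_ac Ex_mult)
    finally have e: "complex_of_real ((cmod (qf N v x))\<^sup>2) = (\<Sum>i<N. \<Sum>j<N. cnj (v i) * v j * Exf (int j - int i) x)" .
    show "(\<Sum>i<N. \<Sum>j<N. cnj (v i) * v j * (Exf (int j - int i) x * of_real (hf f x))) =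
        complex_of_real ((cmod (qf N v x))\<^sup>2 * hf f x)"
      unfolding of_real_mult e sum_distrib_right by (simp add: mult_ac)
  qed
  also have "\<dots> = of_real (LINT x|lborel. (cmod (qf N v x))\<^sup>2 * hf f x)" by (rule integral_complex_of_real)
  finally show ?thesis unfolding N_def .
qed

lemma toep_herm: "herm (Suc n) (\<lambda>i j. toeplitz_mat f n $$ (i,j))"
  unfolding herm_def
proof (intro allI impI)
  fix i j assume ij: "i < Suc n" "j < Suc n"
  have "cnj (cov_fun f (int i - int j)) = (LINT x|lborel. cnj (Exf (int i - int j) x * of_real (hf f x)))"
    unfolding cov_alt by (rule Bochner_Integration.integral_cnj[symmetric])
  also have "\<dots> = cov_fun f (int j - int i)" unfolding cov_alt by (simp add: Ex_cnj)
  finally show "toeplitz_mat f n $$ (i,j) = cnj (toeplitz_mat f n $$ (j,i))"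
    using ij unfolding toeplitz_mat_def by simp
qed

lemma toep_carrier: "toeplitz_mat f n \<in> carrier_mat (Suc n) (Suc n)"
  unfolding toeplitz_mat_def by simp

lemma sq_nonneg_toep: assumes sd: "spectral_density f"
  shows "0 \<le> Re (sq (Suc n) (\<lambda>i j. toeplitz_mat f n $$ (i,j)) v v)"
  unfolding quadform[OF sd] using hf_nonneg[OF sd] by simp

lemma eig_finite: "finite {x::real. eigenvalue (toeplitz_mat f n) (of_real x)}"
proof -
  define T where "T = toeplitz_mat f n"
  have Tc: "T \<in> carrier_mat (Suc n) (Suc n)" unfolding T_def by (rule toep_carrier)
  have "char_poly T \<noteq> 0"
    using degree_monic_char_poly[OF Tc] by (metis coeff_0 zero_neq_one)
  hence fin: "finite {z. poly (char_poly T) z = 0}" by (rule poly_roots_finite)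
  have "{x::real. eigenvalue T (of_real x)} \<subseteq> Re ` {z. poly (char_poly T) z = 0}"
  proof
    fix x :: real assume "x \<in> {x. eigenvalue T (of_real x)}"
    hence "poly (char_poly T) (of_real x) = 0" using eigenvalue_root_char_poly[OF Tc] by simp
    thus "x \<in> Re ` {z. poly (char_poly T) z = 0}" by (intro image_eqI[of _ _ "of_real x"]) auto
  qed
  from finite_subset[OF this finite_imageI[OF fin]] show ?thesis unfolding T_def .
qed

lemma eig_nonneg: assumes sd: "spectral_density f" and ev: "eigenvalue (toeplitz_mat f n) (of_real x)"
  shows "0 \<le> x"
proof -
  define T where "T = toeplitz_mat f n"
  have Tc: "T \<in> carrier_mat (Suc n) (Suc n)" unfolding T_def by (rule toep_carrier)
  obtain u where u: "eigenvector T u (of_real x)" using ev unfolding eigenvalue_def T_def by auto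
  have uc: "u \<in> carrier_vec (Suc n)" and u0: "u \<noteq> 0\<^sub>v (Suc n)" and Tu: "T *\<^sub>v u = of_real x \<cdot>\<^sub>v u"
    using u Tc unfolding eigenvector_def by auto
  define U where "U = (\<lambda>i. u $ i)"
  have "sq (Suc n) (\<lambda>i j. T $$ (i,j)) U U = (\<Sum>i<Suc n. cnj (U i) * (T *\<^sub>v u) $ i)"
    unfolding sq_def U_def
  proof (intro sum.cong refl)
    fix i assume i: "i \<in> {..<Suc n}"
    have "(T *\<^sub>v u) $ i = (\<Sum>j<Suc n. T $$ (i,j) * u $ j)"
      using Tc uc i by (simp add: scalar_prod_def atLeast0LessThan)
    thus "(\<Sum>j<Suc n. cnj (u $ i) * T $$ (i, j) * u $ j) = cnj (u $ i) * (T *\<^sub>v u) $ i"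
      by (simp only: sum_distrib_left mult.assoc)
  qed
  also have "\<dots> = (\<Sum>i<Suc n. of_real x * (cnj (U i) * U i))"
    using uc Tc unfolding Tu U_def by (intro sum.cong refl) (simp add: mult_ac)
  also have "\<dots> = of_real (x * nrm (Suc n) U)"
    unfolding nrm_def of_real_mult of_real_sum sum_distrib_left cnjs by simp
  finally have e: "sq (Suc n) (\<lambda>i j. T $$ (i,j)) U U = of_real (x * nrm (Suc n) U)" .
  have "nrm (Suc n) U \<noteq> 0"
  proof
    assume "nrm (Suc n) U = 0"
    hence "u = 0\<^sub>v (Suc n)" using nrm_zero uc unfolding U_def by (intro eq_vecI) auto
    thus False using u0 by simp
  qed
  hence np: "nrm (Suc n) U > 0" using nrm_nonneg[of "Suc n" U] by simp
  have "0 \<le> x * nrm (Suc n) U" using sq_nonneg_toep[OF sd, of n U] e unfolding T_def by simp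
  thus ?thesis using np by (simp add: zero_le_mult_iff)
qed

lemma min_eig_props: assumes sd: "spectral_density f" and v: "nrm (Suc n) v > 0"
  shows "0 \<le> min_eig f n"
    and "min_eig f n * nrm (Suc n) v \<le> Re (sq (Suc n) (\<lambda>i j. toeplitz_mat f n $$ (i,j)) v v)"
proof -
  define S where "S = {x::real. eigenvalue (toeplitz_mat f n) (of_real x)}"
  have fin: "finite S" unfolding S_def by (rule eig_finite)
  obtain \<mu> where mu: "eigenvalue (toeplitz_mat f n) (of_real \<mu>)"
    "\<mu> * nrm (Suc n) v \<le> Re (sq (Suc n) (\<lambda>i j. toeplitz_mat f n $$ (i,j)) v v)"
    using herm_eig[OF toep_carrier toep_herm v] by blast
  have muS: "\<mu> \<in> S" using mu S_def by simp
  hence ne: "S \<noteq> {}" by auto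
  have me: "min_eig f n = Min S" unfolding min_eig_def S_def ..
  have "Min S \<in> S" using fin ne by (rule Min_in)
  thus "0 \<le> min_eig f n" unfolding me S_def using eig_nonneg[OF sd] by simp
  have "Min S \<le> \<mu>" using fin muS by (rule Min_le)
  hence "Min S * nrm (Suc n) v \<le> \<mu> * nrm (Suc n) v" using v by (intro mult_right_mono) auto
  thus "min_eig f n * nrm (Suc n) v \<le> Re (sq (Suc n) (\<lambda>i j. toeplitz_mat f n $$ (i,j)) v v)"
    using mu(2) me by simp
qed

lemma E_infinite: assumes sd: "spectral_density f" shows "infinite (E_set f)"
proof
  assume finE: "finite (E_set f)"
  define A where "A = {x\<in>{-pi..pi}. 0 < f x}"
  define A' where "A' = A - {-pi}"
  have "inj_on cis A'"
  proof (rule inj_onI)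
    fix x y assume "x \<in> A'" "y \<in> A'" "cis x = cis y"
    hence "x \<in> {-pi<..pi}" "y \<in> {-pi<..pi}" "Arg (cis x) = Arg (cis y)" unfolding A'_def A_def by auto
    thus "x = y" using Arg_cis by metis
  qed
  moreover have "cis ` A' \<subseteq> E_set f" unfolding A'_def A_def E_set_def by auto
  ultimately have "finite A'" using finE by (meson finite_imageD finite_subset)
  hence "finite (insert (-pi) A')" by simp
  moreover have "A \<subseteq> insert (-pi) A'" unfolding A'_def by auto
  ultimately have "finite A" by (rule finite_subset[rotated])
  hence "A \<in> null_sets lborel" by (rule finite_imp_null_set_lborel)
  hence "emeasure lborel A = 0" by auto
  thus False using sd unfolding spectral_density_def A_def by simp
qed

lemma E_sub: "closure (E_set f) \<subseteq> cball 0 1"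
  by (rule closure_minimal) (auto simp: E_set_def)

lemma qf_cont: "continuous_on UNIV (qf N v)"
  unfolding qf_def by (intro continuous_intros Ex_cont)

lemma main_bound:
  assumes sd: "spectral_density f" and n: "n \<ge> 1"
  shows "min_eig f n \<le> 4 * (LINT x|lborel. hf f x) * nth_diam (closure (E_set f)) (Suc n) ^ (2 * n)"
proof -
  define F where "F = closure (E_set f)"
  have Fc: "F \<subseteq> cball 0 1" unfolding F_def by (rule E_sub)
  have Finf: "infinite F" unfolding F_def using E_infinite[OF sd] closure_subset infinite_super by blast
  hence Fne: "F \<noteq> {}" by auto
  define \<delta> where "\<delta> = nth_diam F (Suc n)"
  have dpos: "\<delta> > 0" unfolding \<delta>_def by (rule diam_pos[OF Fc Finf])
  obtain z where zF: "\<forall>i<n. z i \<in> F" and zb: "\<forall>w\<in>F. (\<Prod>i<n. cmod (w - z i)) \<le> 2 * \<delta> ^ n"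
    using cheb[OF Fc Fne n dpos[unfolded \<delta>_def]] unfolding \<delta>_def by blast
  define p :: "complex poly" where "p = (\<Prod>i<n. [:- z i, 1:])"
  have degp: "degree p = n" unfolding p_def
    by (subst degree_prod_eq_sum_degree) auto
  have lcp: "coeff p n = 1" using lead_coeff_prod[of "\<lambda>i. [:- z i, 1:]" "{..<n}"] degp
    unfolding p_def by simp
  have polyp: "poly p w = (\<Prod>i<n. w - z i)" for w unfolding p_def poly_prod by simp
  define v where "v = (\<lambda>k. cnj (coeff p k))"
  have nv: "nrm (Suc n) v \<ge> 1"
  proof -
    have "(cmod (v n))\<^sup>2 \<le> nrm (Suc n) v" unfolding nrm_def by (rule member_le_sum) auto
    thus ?thesis using lcp unfolding v_def by simp
  qed
  have qfp: "qf (Suc n) v x = cnj (poly p (cis x))" for x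
  proof -
    have "poly p (cis x) = (\<Sum>k<Suc n. coeff p k * cis x ^ k)"
      unfolding poly_altdef degp lessThan_Suc_atMost ..
    hence "cnj (poly p (cis x)) = (\<Sum>k<Suc n. v k * cnj (cis x) ^ k)"
      unfolding v_def by (simp add: cnj_sum)
    also have "\<dots> = qf (Suc n) v x"
      unfolding qf_def
    proof (intro sum.cong refl)
      fix k
      have "cnj (cis x) ^ k = cis (real k * (- x))" unfolding cis_cnj by (rule Complex.DeMoivre)
      also have "\<dots> = exp (\<i> * complex_of_real (real k * (- x)))" by (rule cis_conv_exp)
      also have "\<dots> = Exf (int k) x" unfolding Exf_def by (simp add: algebra_simps)
      finally have "cnj (cis x) ^ k = Exf (int k) x" .
      thus "v k * cnj (cis x) ^ k = v k * Exf (int k) x" by simp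
    qed
    finally show ?thesis by simp
  qed
  have pw: "(cmod (qf (Suc n) v x))\<^sup>2 * hf f x \<le> (2 * \<delta> ^ n)\<^sup>2 * hf f x" for x
  proof (cases "hf f x = 0")
    case True thus ?thesis by simp
  next
    case False
    hence "x \<in> {-pi..pi}" "f x = hf f x" unfolding hf_def indicator_def by (auto split: if_splits)
    moreover have "hf f x > 0" using False hf_nonneg[OF sd, of x] by simp
    ultimately have "cis x \<in> E_set f" unfolding E_set_def by auto
    hence "cis x \<in> F" unfolding F_def using closure_subset by blast
    hence "cmod (qf (Suc n) v x) \<le> 2 * \<delta> ^ n"
      using zb unfolding qfp complex_mod_cnj polyp by (simp add: prod_norm)
    hence "(cmod (qf (Suc n) v x))\<^sup>2 \<le> (2 * \<delta> ^ n)\<^sup>2" by (intro power_mono) auto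
    thus ?thesis using hf_nonneg[OF sd, of x] by (intro mult_right_mono) auto
  qed
  have hint: "integrable lborel (hf f)" by (rule hf_integrable[OF sd])
  have int2: "integrable lborel (\<lambda>x. (2 * \<delta> ^ n)\<^sup>2 * hf f x)" using hint by simp
  have m1: "qf (Suc n) v \<in> borel_measurable lborel"
    using borel_measurable_continuous_onI[OF qf_cont] by simp
  have m2: "hf f \<in> borel_measurable lborel" using hint by auto
  have int1: "integrable lborel (\<lambda>x. (cmod (qf (Suc n) v x))\<^sup>2 * hf f x)"
  proof (rule Bochner_Integration.integrable_bound[OF int2])
    show "(\<lambda>x. (cmod (qf (Suc n) v x))\<^sup>2 * hf f x) \<in> borel_measurable lborel"
      using m1 m2 by measurable
    show "AE x in lborel. norm ((cmod (qf (Suc n) v x))\<^sup>2 * hf f x) \<le> norm ((2 * \<delta> ^ n)\<^sup>2 * hf f x)"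
      using pw hf_nonneg[OF sd] by (simp add: abs_mult)
  qed
  have "Re (sq (Suc n) (\<lambda>i j. toeplitz_mat f n $$ (i,j)) v v) = (LINT x|lborel. (cmod (qf (Suc n) v x))\<^sup>2 * hf f x)"
    unfolding quadform[OF sd] by simp
  also have "\<dots> \<le> (LINT x|lborel. (2 * \<delta> ^ n)\<^sup>2 * hf f x)"
    by (rule integral_mono[OF int1 int2 pw])
  also have "\<dots> = 4 * (LINT x|lborel. hf f x) * \<delta> ^ (2 * n)"
    by (simp add: power_mult_distrib power_mult[symmetric] mult.commute)
  finally have rq: "Re (sq (Suc n) (\<lambda>i j. toeplitz_mat f n $$ (i,j)) v v) \<le> 4 * (LINT x|lborel. hf f x) * \<delta> ^ (2 * n)" .
  have nvp: "nrm (Suc n) v > 0" using nv by simp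
  have m0: "0 \<le> min_eig f n" by (rule min_eig_props(1)[OF sd nvp])
  have "min_eig f n \<le> min_eig f n * nrm (Suc n) v" using m0 nv by (simp add: mult_le_cancel_left1)
  also have "\<dots> \<le> Re (sq (Suc n) (\<lambda>i j. toeplitz_mat f n $$ (i,j)) v v)" by (rule min_eig_props(2)[OF sd nvp])
  finally show ?thesis using rq unfolding \<delta>_def F_def by simp
qed

theorem mainTheorem17:
  fixes f :: "real \<Rightarrow> real"
  assumes "spectral_density f"
  shows "limsup (\<lambda>n. ereal (min_eig f n powr (1 / (2 * real n))))
           \<le> ereal (outer_transfinite_diam (E_set f))"
proof -
  note sd = assms
  define F where "F = closure (E_set f)"
  have Fc: "F \<subseteq> cball 0 1" unfolding F_def by (rule E_sub)
  have Finf: "infinite F" unfolding F_def using E_infinite[OF sd] closure_subset infinite_super by blast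
  hence Fne: "F \<noteq> {}" by auto
  define L where "L = lim (nth_diam F)"
  have dconv: "(\<lambda>n. nth_diam F (Suc n)) \<longlonglongrightarrow> L" unfolding L_def by (rule diam_conv[OF Fc Fne])
  have otd: "outer_transfinite_diam (E_set f) = L"
    unfolding outer_transfinite_diam_def transfinite_diam_def L_def F_def ..
  define I where "I = (LINT x|lborel. hf f x)"
  have I0: "I \<ge> 0" unfolding I_def using hf_nonneg[OF sd] by simp
  define C where "C = max 1 (4 * I)"
  have C1: "C \<ge> 1" unfolding C_def by simp
  define b where "b = (\<lambda>n. C powr (1 / (2 * real n)) * nth_diam F (Suc n))"
  have bd: "min_eig f n powr (1 / (2 * real n)) \<le> b n" if n: "n \<ge> 1" for n
  proof -
    define \<delta> where "\<delta> = nth_diam F (Suc n)"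
    have dpos: "\<delta> > 0" unfolding \<delta>_def by (rule diam_pos[OF Fc Finf])
    have "nrm (Suc n) (\<lambda>k. 1) > 0" unfolding nrm_def by simp
    hence m0: "0 \<le> min_eig f n" by (rule min_eig_props(1)[OF sd])
    have "min_eig f n \<le> 4 * I * \<delta> ^ (2 * n)"
      using main_bound[OF sd n] unfolding I_def \<delta>_def F_def .
    also have "\<dots> \<le> C * \<delta> ^ (2 * n)" unfolding C_def using dpos by (intro mult_right_mono) auto
    finally have le: "min_eig f n \<le> C * \<delta> ^ (2 * n)" .
    have e0: "1 / (2 * real n) \<ge> 0" by simp
    have "min_eig f n powr (1 / (2 * real n)) \<le> (C * \<delta> ^ (2 * n)) powr (1 / (2 * real n))"
      by (rule powr_mono2[OF e0 m0 le])
    also have "\<dots> = C powr (1 / (2 * real n)) * (\<delta> ^ (2 * n)) powr (1 / (2 * real n))"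
      using C1 dpos by (simp add: powr_mult)
    also have "(\<delta> ^ (2 * n)) powr (1 / (2 * real n)) = \<delta>"
    proof -
      have "(\<delta> ^ (2 * n)) powr (1 / (2 * real n)) = (\<delta> powr real (2 * n)) powr (1 / (2 * real n))"
        using powr_realpow[OF dpos, of "2 * n"] by simp
      also have "\<dots> = \<delta> powr (real (2 * n) * (1 / (2 * real n)))" by (rule powr_powr)
      also have "real (2 * n) * (1 / (2 * real n)) = 1" using n by simp
      finally show ?thesis using dpos by simp
    qed
    finally show ?thesis unfolding b_def \<delta>_def .
  qed
  have cpow: "(\<lambda>n. C powr (1 / (2 * real n))) \<longlonglongrightarrow> 1"
  proof -
    have "(\<lambda>n. (ln C / 2) / real n) \<longlonglongrightarrow> 0" by (rule lim_const_over_n)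
    hence "(\<lambda>n. exp ((ln C / 2) / real n)) \<longlonglongrightarrow> exp 0" by (intro tendsto_intros)
    moreover have "exp ((ln C / 2) / real n) = C powr (1 / (2 * real n))" for n
      using C1 unfolding powr_def by simp
    ultimately show ?thesis by simp
  qed
  have bconv: "b \<longlonglongrightarrow> L" unfolding b_def using tendsto_mult[OF cpow dconv] by simp
  have "limsup (\<lambda>n. ereal (min_eig f n powr (1 / (2 * real n)))) \<le> limsup (\<lambda>n. ereal (b n))"
  proof (rule Limsup_mono)
    show "\<forall>\<^sub>F n in sequentially. ereal (min_eig f n powr (1 / (2 * real n))) \<le> ereal (b n)"
      using bd by (intro eventually_sequentiallyI[of 1]) auto
  qed
  also have "limsup (\<lambda>n. ereal (b n)) = ereal L"
    by (rule lim_imp_Limsup) (auto intro: bconv tendsto_ereal)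
  finally show ?thesis unfolding otd .
qed

end
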